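(* Let $G$ be a strongly connected directed multigraph with a designated set of ordinary vertices such that every two distinct ordinary vertices are $(k+1)$-edge-connected, and let $s$ be a fixed ordinary vertex. Let $u$ and $w$ be two ordinary vertices such that $M(u)\neq M(w)$. Then either $M(u)\neq\bot$ and $w\notin M(u)$, or $M(w)\neq\bot$ and $u\notin M(w)$.
   Context: For a vertex set $S$, $\mathit{out}(S)$ is the number of edges leaving $S$; $S$ is a $j$-out set if $\mathit{out}(S)=j$. For vertices $x,y$, $\lambda(x,y)$ is the minimum of $\mathit{out}(S)$ over vertex sets $S$ with $x\in S$, $y\notin S$. Two vertices $x,y$ are $j$-edge-connected if $\lambda(x,y)\ge j$ and $\lambda(y,x)\ge j$. For a vertex $v$ with $\lambda(v,s)\ge k+1$: if there is a $(k+1)$-out set $S$ with $v\in S$, $s\notin S$, then $M(v)$ denotes the inclusion-wise minimum such $(k+1)$-out set; otherwise $M(v)=\bot$. *)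

theory Defs
  imports Main
begin

text \<open>A directed multigraph is given by a finite vertex set V and an edge
multiplicity function c, where c x y is the number of edges from x to y.\<close>

definition out_deg :: "'a set \<Rightarrow> ('a \<Rightarrow> 'a \<Rightarrow> nat) \<Rightarrow> 'a set \<Rightarrow> nat" where
  "out_deg V c S = (\<Sum>x\<in>S. \<Sum>y\<in>V - S. c x y)"

definition lam :: "'a set \<Rightarrow> ('a \<Rightarrow> 'a \<Rightarrow> nat) \<Rightarrow> 'a \<Rightarrow> 'a \<Rightarrow> nat" where
  "lam V c x y = Min {out_deg V c S | S. S \<subseteq> V \<and> x \<in> S \<and> y \<notin> S}"

definition edge_connected :: "'a set \<Rightarrow> ('a \<Rightarrow> 'a \<Rightarrow> nat) \<Rightarrow> nat \<Rightarrow> 'a \<Rightarrow> 'a \<Rightarrow> bool" where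
  "edge_connected V c j x y \<longleftrightarrow> lam V c x y \<ge> j \<and> lam V c y x \<ge> j"

definition strongly_connected :: "'a set \<Rightarrow> ('a \<Rightarrow> 'a \<Rightarrow> nat) \<Rightarrow> bool" where
  "strongly_connected V c \<longleftrightarrow>
     (\<forall>x\<in>V. \<forall>y\<in>V. (\<lambda>a b. a \<in> V \<and> b \<in> V \<and> c a b > 0)\<^sup>*\<^sup>* x y)"

definition out_sep :: "'a set \<Rightarrow> ('a \<Rightarrow> 'a \<Rightarrow> nat) \<Rightarrow> nat \<Rightarrow> 'a \<Rightarrow> 'a \<Rightarrow> 'a set \<Rightarrow> bool" where
  "out_sep V c k s v S \<longleftrightarrow> S \<subseteq> V \<and> v \<in> S \<and> s \<notin> S \<and> out_deg V c S = k + 1"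

text \<open>M(v): None encodes \<bottom>; otherwise the inclusion-wise minimum (k+1)-out set.\<close>
definition Mset :: "'a set \<Rightarrow> ('a \<Rightarrow> 'a \<Rightarrow> nat) \<Rightarrow> nat \<Rightarrow> 'a \<Rightarrow> 'a \<Rightarrow> 'a set option" where
  "Mset V c k s v =
     (if \<exists>S. out_sep V c k s v S
      then Some (THE S. out_sep V c k s v S \<and> (\<forall>T. out_sep V c k s v T \<longrightarrow> S \<subseteq> T))
      else None)"

end

theory Submission
  imports Defs
begin

lemma out_deg_alt:
  assumes "finite V" "S \<subseteq> V"
  shows "out_deg V c S = (\<Sum>x\<in>V. \<Sum>y\<in>V. if x \<in> S \<and> y \<notin> S then c x y else 0)"
proof -
  have "(\<Sum>x\<in>V. \<Sum>y\<in>V. if x \<in> S \<and> y \<notin> S then c x y else 0)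
      = (\<Sum>x\<in>V. if x \<in> S then (\<Sum>y\<in>V - S. c x y) else 0)"
  proof (rule sum.cong[OF refl])
    fix x assume "x \<in> V"
    have "(\<Sum>y\<in>V. if y \<in> V - S then c x y else 0) = (\<Sum>y\<in>V - S. c x y)"
      using sum.inter_restrict[OF assms(1), of "\<lambda>y. c x y" "V - S"] by (simp add: Diff_subset Int_absorb1)
    then show "(\<Sum>y\<in>V. if x \<in> S \<and> y \<notin> S then c x y else 0)
      = (if x \<in> S then (\<Sum>y\<in>V - S. c x y) else 0)"
      by (cases "x \<in> S") (auto intro!: sum.cong)
  qed
  also have "\<dots> = (\<Sum>x\<in>S. \<Sum>y\<in>V - S. c x y)"
    using sum.inter_restrict[OF assms(1), of "\<lambda>x. \<Sum>y\<in>V - S. c x y" S] assms(2) by (simp add: Int_absorb1)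
  finally show ?thesis unfolding out_deg_def by simp
qed

lemma ptw:
  "(if x \<in> A \<inter> B \<and> y \<notin> A \<inter> B then (n::nat) else 0)
      + (if x \<in> A \<union> B \<and> y \<notin> A \<union> B then n else 0)
   \<le> (if x \<in> A \<and> y \<notin> A then n else 0) + (if x \<in> B \<and> y \<notin> B then n else 0)"
  by (cases "x \<in> A"; cases "x \<in> B"; cases "y \<in> A"; cases "y \<in> B") simp_all

lemma submod:
  assumes "finite V" "A \<subseteq> V" "B \<subseteq> V"
  shows "out_deg V c (A \<inter> B) + out_deg V c (A \<union> B) \<le> out_deg V c A + out_deg V c B"
proof -
  have AB: "A \<inter> B \<subseteq> V" "A \<union> B \<subseteq> V" using assms by auto
  have "out_deg V c (A \<inter> B) + out_deg V c (A \<union> B) =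
    (\<Sum>x\<in>V. \<Sum>y\<in>V. (if x \<in> A \<inter> B \<and> y \<notin> A \<inter> B then c x y else 0)
      + (if x \<in> A \<union> B \<and> y \<notin> A \<union> B then c x y else 0))"
    using out_deg_alt[OF assms(1) AB(1)] out_deg_alt[OF assms(1) AB(2)]
    by (simp add: sum.distrib)
  also have "\<dots> \<le> (\<Sum>x\<in>V. \<Sum>y\<in>V. (if x \<in> A \<and> y \<notin> A then c x y else 0)
      + (if x \<in> B \<and> y \<notin> B then c x y else 0))"
    by (intro sum_mono) (simp add: ptw)
  also have "\<dots> = out_deg V c A + out_deg V c B"
    using out_deg_alt[OF assms(1) assms(2)] out_deg_alt[OF assms(1) assms(3)]
    by (simp add: sum.distrib)
  finally show ?thesis .
qed

lemma lam_le:
  assumes "finite V" "S \<subseteq> V" "x \<in> S" "y \<notin> S"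
  shows "lam V c x y \<le> out_deg V c S"
proof -
  have "{out_deg V c S | S. S \<subseteq> V \<and> x \<in> S \<and> y \<notin> S} \<subseteq> out_deg V c ` Pow V" by auto
  then have "finite {out_deg V c S | S. S \<subseteq> V \<and> x \<in> S \<and> y \<notin> S}"
    using assms(1) finite_subset by blast
  then show ?thesis unfolding lam_def using assms by (intro Min_le) auto
qed

lemma Mset_props:
  assumes "finite V" "Ord \<subseteq> V"
    and "\<forall>x\<in>Ord. \<forall>y\<in>Ord. x \<noteq> y \<longrightarrow> edge_connected V c (k + 1) x y"
    and "s \<in> Ord" "v \<in> Ord" "out_sep V c k s v S0"
  shows "\<exists>M. Mset V c k s v = Some M \<and> out_sep V c k s v M \<and> (\<forall>T. out_sep V c k s v T \<longrightarrow> M \<subseteq> T)"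
proof -
  have vs: "v \<noteq> s" using assms(6) unfolding out_sep_def by auto
  have lamv: "lam V c v s \<ge> k + 1" using assms(3-5) vs unfolding edge_connected_def by auto
  have inter: "out_sep V c k s v (A \<inter> B)" if "out_sep V c k s v A" "out_sep V c k s v B" for A B
  proof -
    have h: "A \<subseteq> V" "B \<subseteq> V" "v \<in> A" "v \<in> B" "s \<notin> A" "s \<notin> B"
      "out_deg V c A = k + 1" "out_deg V c B = k + 1"
      using that unfolding out_sep_def by auto
    have "lam V c v s \<le> out_deg V c (A \<inter> B)" using h assms(1) by (intro lam_le) auto
    moreover have "lam V c v s \<le> out_deg V c (A \<union> B)" using h assms(1) by (intro lam_le) auto
    moreover have "out_deg V c (A \<inter> B) + out_deg V c (A \<union> B) \<le> out_deg V c A + out_deg V c B"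
      using submod[OF assms(1) h(1,2)] .
    ultimately have "out_deg V c (A \<inter> B) = k + 1" using lamv h by linarith
    then show ?thesis using h unfolding out_sep_def by auto
  qed
  obtain M where M: "out_sep V c k s v M" and Mmin: "\<And>T. out_sep V c k s v T \<Longrightarrow> card M \<le> card T"
    using ex_has_least_nat[of "out_sep V c k s v" S0 card] assms(6) by blast
  have fin: "\<And>T. out_sep V c k s v T \<Longrightarrow> finite T"
    using assms(1) finite_subset unfolding out_sep_def by blast
  have sub: "M \<subseteq> T" if T: "out_sep V c k s v T" for T
  proof (rule ccontr)
    assume "\<not> M \<subseteq> T"
    then have "M \<inter> T \<subset> M" by auto
    then have "card (M \<inter> T) < card M" using fin[OF M] by (simp add: psubset_card_mono)
    with Mmin[OF inter[OF M T]] show False by simp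
  qed
  have the: "(THE S. out_sep V c k s v S \<and> (\<forall>T. out_sep V c k s v T \<longrightarrow> S \<subseteq> T)) = M"
    by (rule the_equality) (use M sub in auto)
  show ?thesis unfolding Mset_def using M sub the by auto
qed

lemma Mset_None:
  assumes "\<not> (\<exists>S. out_sep V c k s v S)"
  shows "Mset V c k s v = None"
  using assms unfolding Mset_def by auto

theorem mainTheorem4:
  fixes V :: "'a set" and c :: "'a \<Rightarrow> 'a \<Rightarrow> nat" and Ord :: "'a set"
    and k :: nat and s u w :: 'a
  assumes "finite V"
    and "strongly_connected V c"
    and "Ord \<subseteq> V"
    and "\<forall>x\<in>Ord. \<forall>y\<in>Ord. x \<noteq> y \<longrightarrow> edge_connected V c (k + 1) x y"
    and "s \<in> Ord" and "u \<in> Ord" and "w \<in> Ord"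
    and "Mset V c k s u \<noteq> Mset V c k s w"
  shows "(\<exists>Mu. Mset V c k s u = Some Mu \<and> w \<notin> Mu)
       \<or> (\<exists>Mw. Mset V c k s w = Some Mw \<and> u \<notin> Mw)"
proof (cases "\<exists>S. out_sep V c k s u S")
  case True
  then obtain Mu where Mu: "Mset V c k s u = Some Mu" "out_sep V c k s u Mu"
    "\<forall>T. out_sep V c k s u T \<longrightarrow> Mu \<subseteq> T"
    using Mset_props[OF assms(1,3,4,5,6)] by blast
  show ?thesis
  proof (cases "w \<in> Mu")
    case False then show ?thesis using Mu by blast
  next
    case wMu: True
    have sw: "out_sep V c k s w Mu" using Mu(2) wMu unfolding out_sep_def by auto
    then obtain Mw where Mw: "Mset V c k s w = Some Mw" "out_sep V c k s w Mw"
      "\<forall>T. out_sep V c k s w T \<longrightarrow> Mw \<subseteq> T"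
      using Mset_props[OF assms(1,3,4,5,7)] by blast
    show ?thesis
    proof (cases "u \<in> Mw")
      case False then show ?thesis using Mw by blast
    next
      case True
      have "out_sep V c k s u Mw" using Mw(2) True unfolding out_sep_def by auto
      then have "Mu \<subseteq> Mw" using Mu(3) by blast
      moreover have "Mw \<subseteq> Mu" using Mw(3) sw by blast
      ultimately show ?thesis using Mu(1) Mw(1) assms(8) by auto
    qed
  qed
next
  case False
  then have Nu: "Mset V c k s u = None" by (rule Mset_None)
  then have "Mset V c k s w \<noteq> None" using assms(8) by auto
  then have "\<exists>S. out_sep V c k s w S" unfolding Mset_def by meson
  then obtain Mw where Mw: "Mset V c k s w = Some Mw" "out_sep V c k s w Mw"
    using Mset_props[OF assms(1,3,4,5,7)] by blast
  have "u \<notin> Mw" using False Mw(2) unfolding out_sep_def by auto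
  then show ?thesis using Mw by blast
qed

end
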